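(* Consider the RCP model without queue feedback with parameters $C,a,\tau_1,\tau_2>0$, $\gamma\in(0,1]$, and bifurcation parameter $\kappa>0$, and let $\kappa_c=\dfrac{\pi}{2a\cos\!\left(\frac{\pi(\tau_1-\tau_2)}{2(\tau_1+\tau_2)}\right)}$ be the value at which its equilibrium $R^*=\gamma C/2$ loses local stability through a Hopf bifurcation. Let $c_1(0)$ denote the first Lyapunov coefficient of the Hopf normal form at $\kappa=\kappa_c$ (Hassard–Kazarinoff–Wan normalization, $\dot z=i\omega_0 z+c_1(0)z|z|^2+\cdots$ on the center manifold), and $\vartheta=\pi\tau_1/(\tau_1+\tau_2)\in(0,\pi)$. Then $$\operatorname{sign}\big(\operatorname{Re}c_1(0)\big)=\operatorname{sign}\!\left(\frac{2\pi\,\tilde f(\vartheta)}{(\gamma C)^2(\tau_1+\tau_2)}\right)=\operatorname{sign}\tilde f(\vartheta)<0,$$ with $\tilde f$ as in the context. Consequently $\mu_2=-\operatorname{Re}c_1(0)/\alpha'(0)>0$ and $\beta_2=2\operatorname{Re}c_1(0)<0$, where $\alpha'(0)=\operatorname{Re}(d\lambda/d\kappa)|_{\kappa=\kappa_c}>0$: for all parameter values, the Hopf bifurcation is super-critical and the bifurcating periodic solutions are asymptotically orbitally stable.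
   Context: RCP model without queue feedback: $$\frac{d}{dt}R(t)=\kappa\,\frac{2aR(t)}{\gamma C(\tau_1+\tau_2)}\big(\gamma C-y(t)\big),\quad y(t)=R(t-\tau_1)+R(t-\tau_2).$$ $\omega_0=\pi/(\tau_1+\tau_2)$ is the crossing frequency, and $\lambda(\kappa)$ is the root of the characteristic equation $\lambda+\kappa\frac{a}{\tau_1+\tau_2}(e^{-\lambda\tau_1}+e^{-\lambda\tau_2})=0$ with $\lambda(\kappa_c)=i\omega_0$. $$\tilde f(\vartheta)=-2\pi\sin^4\vartheta-\pi\sin^2\vartheta\cos^2(2\vartheta)-2\cos(2\vartheta)\sin^3\vartheta-\cos(2\vartheta)\sin^2\vartheta\cos\vartheta\,(\pi-2\vartheta).$$ Super-critical means $\mu_2>0$ (periodic orbits exist for $\kappa>\kappa_c$); asymptotic orbital stability of the orbits corresponds to Floquet exponent $\beta_2<0$. *)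

theory Defs
  imports "HOL-Analysis.Analysis"
begin

text \<open>A scalar delay differential equation with finitely many discrete delays
  d 0, ..., d (n-1) (all non-negative), written in perturbation form around an equilibrium,
    u'(t) = (SUM j<n. b j * u(t - d j)) + F(u_t),
    F(phi) = (SUM i<n. SUM j<n. Q i j * phi(- d i) * phi(- d j))   (quadratic nonlinearity).  At a Hopf point with
  Delta(i w) = 0 the first Lyapunov coefficient c1(0) of the normal form
  z' = i w z + c1(0) z |z|^2 + ... on the centre manifold is given by the HKW recipe:
  q(theta) = exp(i w theta), adjoint normalised so that the multiplier conj(q*(0)) equals
  1 / Delta'(i w), g = conj(q*(0)) F(z q + conj z conj q + W), with
  g = g20 z^2/2 + g11 z conj z + g02 conj z^2/2 + g21 z^2 conj z / 2 + ...,
  W20, W11 the centre-manifold coefficients, and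
  c1(0) = i/(2w) (g20 g11 - 2|g11|^2 - |g02|^2/3) + g21/2.\<close>

definition dde_char :: "nat \<Rightarrow> (nat \<Rightarrow> real) \<Rightarrow> (nat \<Rightarrow> real) \<Rightarrow> complex \<Rightarrow> complex" where
  "dde_char n d b l = l - (\<Sum>j<n. of_real (b j) * exp (- l * of_real (d j)))"

definition dde_char_deriv :: "nat \<Rightarrow> (nat \<Rightarrow> real) \<Rightarrow> (nat \<Rightarrow> real) \<Rightarrow> complex \<Rightarrow> complex" where
  "dde_char_deriv n d b l = 1 + (\<Sum>j<n. of_real (b j * d j) * exp (- l * of_real (d j)))"

definition dde_quad :: "nat \<Rightarrow> (nat \<Rightarrow> real) \<Rightarrow> (nat \<Rightarrow> nat \<Rightarrow> real)
    \<Rightarrow> (real \<Rightarrow> complex) \<Rightarrow> (real \<Rightarrow> complex) \<Rightarrow> complex" where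
  "dde_quad n d Q \<phi> \<psi> = (\<Sum>i<n. \<Sum>j<n. of_real (Q i j) * \<phi> (- d i) * \<psi> (- d j))"

definition hopf_first_lyapunov ::
  "nat \<Rightarrow> (nat \<Rightarrow> real) \<Rightarrow> (nat \<Rightarrow> real) \<Rightarrow> (nat \<Rightarrow> nat \<Rightarrow> real) \<Rightarrow> real \<Rightarrow> complex" where
  "hopf_first_lyapunov n d b Q \<omega> =
    (let w = complex_of_real \<omega>;
         q = (\<lambda>\<theta>::real. exp (\<i> * w * of_real \<theta>));
         qb = (\<lambda>\<theta>::real. cnj (q \<theta>));
         B = dde_quad n d Q;
         Db = 1 / dde_char_deriv n d b (\<i> * w);
         F20 = 2 * B q q;
         F11 = B q qb + B qb q;
         F02 = 2 * B qb qb;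
         g20 = Db * F20;
         g11 = Db * F11;
         g02 = Db * F02;
         E1 = F20 / dde_char n d b (2 * \<i> * w);
         E2 = F11 / dde_char n d b 0;
         W20 = (\<lambda>\<theta>. \<i> * g20 / w * q \<theta> + \<i> * cnj g02 / (3 * w) * qb \<theta>
                    + E1 * exp (2 * \<i> * w * of_real \<theta>));
         W11 = (\<lambda>\<theta>. - \<i> * g11 / w * q \<theta> + \<i> * cnj g11 / w * qb \<theta> + E2);
         g21 = Db * (2 * (B W11 q + B q W11) + (B W20 qb + B qb W20))
     in \<i> / (2 * w) * (g20 * g11 - 2 * (of_real (cmod g11))\<^sup>2 - (of_real (cmod g02))\<^sup>2 / 3)
        + g21 / 2)"

text \<open>Right-hand side of  R'(t) = kappa * 2 a R(t) / (gamma C (tau1+tau2)) * (gamma C - y(t)),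
  y(t) = R(t - tau1) + R(t - tau2).\<close>
definition rcp_rhs :: "real \<Rightarrow> real \<Rightarrow> real \<Rightarrow> real \<Rightarrow> real \<Rightarrow> real \<Rightarrow> real \<Rightarrow> real \<Rightarrow> real \<Rightarrow> real" where
  "rcp_rhs \<kappa> a C \<gamma> \<tau>1 \<tau>2 R R1 R2 =
     \<kappa> * (2 * a * R) / (\<gamma> * C * (\<tau>1 + \<tau>2)) * (\<gamma> * C - (R1 + R2))"

definition rcp_equilibrium :: "real \<Rightarrow> real \<Rightarrow> real" where
  "rcp_equilibrium C \<gamma> = \<gamma> * C / 2"

definition rcp_delays :: "real \<Rightarrow> real \<Rightarrow> nat \<Rightarrow> real" where
  "rcp_delays \<tau>1 \<tau>2 j = (if j = 1 then \<tau>1 else if j = 2 then \<tau>2 else 0)"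

definition rcp_lin :: "real \<Rightarrow> real \<Rightarrow> real \<Rightarrow> real \<Rightarrow> nat \<Rightarrow> real" where
  "rcp_lin \<kappa> a \<tau>1 \<tau>2 j = (if j = 1 \<or> j = 2 then - \<kappa> * a / (\<tau>1 + \<tau>2) else 0)"

definition rcp_quadcoeff :: "real \<Rightarrow> real \<Rightarrow> real \<Rightarrow> real \<Rightarrow> real \<Rightarrow> real \<Rightarrow> nat \<Rightarrow> nat \<Rightarrow> real" where
  "rcp_quadcoeff \<kappa> a C \<gamma> \<tau>1 \<tau>2 i j =
     (if i = 0 \<and> (j = 1 \<or> j = 2) then - 2 * \<kappa> * a / (\<gamma> * C * (\<tau>1 + \<tau>2)) else 0)"

text \<open>Sanity fact: the perturbation form above is exactly the RCP model around R* = gamma C / 2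
  (the nonlinearity is purely quadratic).\<close>
lemma rcp_perturbation_form:
  assumes "\<gamma> * C \<noteq> 0" "\<tau>1 + \<tau>2 \<noteq> 0"
  shows "rcp_rhs \<kappa> a C \<gamma> \<tau>1 \<tau>2 (rcp_equilibrium C \<gamma> + u 0)
            (rcp_equilibrium C \<gamma> + u 1) (rcp_equilibrium C \<gamma> + u 2)
       = (\<Sum>j<3. rcp_lin \<kappa> a \<tau>1 \<tau>2 j * u j)
         + (\<Sum>i<3. \<Sum>j<3. rcp_quadcoeff \<kappa> a C \<gamma> \<tau>1 \<tau>2 i j * u i * u j)"
proof -
  have s: "{..<3::nat} = {0,1,2}" by auto
  show ?thesis using assms
    by (simp add: s rcp_rhs_def rcp_equilibrium_def rcp_lin_def rcp_quadcoeff_def)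
       (simp add: divide_simps, algebra)
qed

definition rcp_char :: "real \<Rightarrow> real \<Rightarrow> real \<Rightarrow> real \<Rightarrow> complex \<Rightarrow> complex" where
  "rcp_char a \<tau>1 \<tau>2 \<kappa> l =
     l + of_real (\<kappa> * a / (\<tau>1 + \<tau>2)) * (exp (- l * of_real \<tau>1) + exp (- l * of_real \<tau>2))"

definition rcp_omega0 :: "real \<Rightarrow> real \<Rightarrow> real" where
  "rcp_omega0 \<tau>1 \<tau>2 = pi / (\<tau>1 + \<tau>2)"

definition rcp_kappa_c :: "real \<Rightarrow> real \<Rightarrow> real \<Rightarrow> real" where
  "rcp_kappa_c a \<tau>1 \<tau>2 = pi / (2 * a * cos (pi * (\<tau>1 - \<tau>2) / (2 * (\<tau>1 + \<tau>2))))"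

definition rcp_c1 :: "real \<Rightarrow> real \<Rightarrow> real \<Rightarrow> real \<Rightarrow> real \<Rightarrow> complex" where
  "rcp_c1 a C \<gamma> \<tau>1 \<tau>2 =
     hopf_first_lyapunov 3 (rcp_delays \<tau>1 \<tau>2) (rcp_lin (rcp_kappa_c a \<tau>1 \<tau>2) a \<tau>1 \<tau>2)
       (rcp_quadcoeff (rcp_kappa_c a \<tau>1 \<tau>2) a C \<gamma> \<tau>1 \<tau>2) (rcp_omega0 \<tau>1 \<tau>2)"

definition f_tilde :: "real \<Rightarrow> real" where
  "f_tilde \<theta> = - 2 * pi * sin \<theta> ^ 4 - pi * sin \<theta> ^ 2 * cos (2 * \<theta>) ^ 2
      - 2 * cos (2 * \<theta>) * sin \<theta> ^ 3
      - cos (2 * \<theta>) * sin \<theta> ^ 2 * cos \<theta> * (pi - 2 * \<theta>)"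

end

theory Submission
  imports Defs
begin
lemma poly1: fixes y p :: real assumes "0 \<le> y" "y^2 < 1/2" "p > 3"
  shows "p*(2-2*y^2+(2*y^2-1)^2) + (2*y^2-1)*(2+p*y) > 0"
proof -
  have y1: "y \<le> 1"
  proof (rule ccontr)
    assume "\<not> y \<le> 1" then have "1 < y^2" by (simp add: one_less_power)
    then show False using assms by simp
  qed
  have "(1-2*y^2)*(2+p*y) \<le> (1-2*y^2)*(2*p)"
    using assms y1 by (intro mult_left_mono) (auto intro: order_trans[of _ "2+p"] simp: mult_le_cancel_left1)
  also have "... < p*(2-2*y^2+(2*y^2-1)^2)"
  proof -
    have "(2-2*y^2+(2*y^2-1)^2) - (2-4*y^2) = (2*y^2 - 1/2)^2 + 3/4" by (simp add: power2_eq_square algebra_simps)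
    moreover have "(2*y^2 - 1/2)^2 \<ge> 0" by simp
    ultimately have "2-4*y^2 < 2-2*y^2+(2*y^2-1)^2" by linarith
    then have "p*(2-4*y^2) < p*(2-2*y^2+(2*y^2-1)^2)" using assms by (intro mult_strict_left_mono) auto
    thus ?thesis by (simp add: algebra_simps)
  qed
  finally show ?thesis by (simp add: algebra_simps)
qed

lemma f_tilde_neg: assumes "0 < t" "t < pi" shows "f_tilde t < 0"
proof -
  define s where "s = sin t" define c where "c = cos t" define C2 where "C2 = cos (2*t)"
  have s0: "s > 0" using assms sin_gt_zero s_def by auto
  have s1: "s \<le> 1" by (simp add: s_def)
  have sc: "s^2 + c^2 = 1" by (simp add: s_def c_def)
  have C2e: "C2 = 2*c^2 - 1" by (simp add: C2_def c_def cos_double_cos)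
  have h1: "c*(pi-2*t) \<ge> 0"
  proof (cases "t \<le> pi/2")
    case True
    then have "c \<ge> 0" using assms by (simp add: c_def cos_ge_zero)
    then show ?thesis using True by simp
  next
    case False
    have "cos (pi - t) \<ge> 0" using False assms by (intro cos_ge_zero) auto
    then have "c \<le> 0" by (simp add: c_def)
    then show ?thesis using False by (simp add: mult_nonpos_nonpos)
  qed
  have h2: "c*(pi-2*t) \<le> \<bar>c\<bar> * pi"
  proof -
    have "c*(pi-2*t) \<le> \<bar>c\<bar> * \<bar>pi-2*t\<bar>" by (metis abs_ge_self abs_mult)
    also have "... \<le> \<bar>c\<bar> * pi" using assms by (intro mult_left_mono) auto
    finally show ?thesis .
  qed
  define GG where "GG = 2*pi* s^2 + pi*C2^2 + 2*C2* s + C2*(c*(pi-2*t))"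
  have fG: "f_tilde t = - (s^2) * GG"
    by (simp add: f_tilde_def GG_def s_def c_def C2_def power2_eq_square power4_eq_xxxx power3_eq_cube algebra_simps)
  have "GG > 0"
  proof (cases "C2 \<ge> 0")
    case True
    have "2*pi* s^2 > 0" using s0 by simp
    moreover have "pi*C2^2 \<ge> 0" by simp
    moreover have "2*C2* s \<ge> 0" using True s0 by simp
    moreover have "C2*(c*(pi-2*t)) \<ge> 0" using True h1 by simp
    ultimately show ?thesis unfolding GG_def by linarith
  next
    case False
    define y where "y = \<bar>c\<bar>"
    have y2: "y^2 = c^2" by (simp add: y_def)
    have "y^2 < 1/2" using False C2e y2 by simp
    have a1: "C2*(c*(pi-2*t)) \<ge> C2 * (y*pi)" using False h2 y_def by (intro mult_left_mono_neg) auto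
    have a2: "2*C2* s \<ge> 2*C2" using False s1 by (simp add: mult_le_cancel_left1)
    have s2: "s^2 = 1 - y^2" using sc y2 by simp
    have C2y: "C2 = 2*y^2 - 1" using C2e y2 by simp
    have e1: "pi*(2* s^2+C2^2) = pi*(2-2*y^2+(2*y^2-1)^2)" unfolding s2 C2y by (simp add: algebra_simps)
    have e2: "2*C2 = 2*(2*y^2-1)" "C2 * (y*pi) = (2*y^2-1)*(pi*y)" unfolding C2y by (simp_all add: algebra_simps)
    have "GG \<ge> pi*(2-2*y^2+(2*y^2-1)^2) + (2*y^2-1)*(2+pi*y)"
      using a1 a2 e1 e2 unfolding GG_def by (simp add: algebra_simps)
    moreover have "pi*(2-2*y^2+(2*y^2-1)^2) + (2*y^2-1)*(2+pi*y) > 0"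
      using poly1[OF _ \<open>y^2 < 1/2\<close> pi_gt3] y_def by simp
    ultimately show ?thesis by linarith
  qed
  then show ?thesis using fG s0 by simp
qed

lemma hfl_unfold:
  fixes n d b Q \<omega>
  defines "w \<equiv> complex_of_real \<omega>"
  defines "q \<equiv> (\<lambda>\<theta>::real. exp (\<i> * w * of_real \<theta>))"
  defines "qb \<equiv> (\<lambda>\<theta>::real. cnj (q \<theta>))"
  defines "B \<equiv> dde_quad n d Q"
  defines "Db \<equiv> 1 / dde_char_deriv n d b (\<i> * w)"
  defines "F20 \<equiv> 2 * B q q"
  defines "F11 \<equiv> B q qb + B qb q"
  defines "F02 \<equiv> 2 * B qb qb"
  defines "g20 \<equiv> Db * F20"
  defines "g11 \<equiv> Db * F11"
  defines "g02 \<equiv> Db * F02"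
  defines "E1 \<equiv> F20 / dde_char n d b (2 * \<i> * w)"
  defines "E2 \<equiv> F11 / dde_char n d b 0"
  defines "W20 \<equiv> (\<lambda>\<theta>. \<i> * g20 / w * q \<theta> + \<i> * cnj g02 / (3 * w) * qb \<theta>
                    + E1 * exp (2 * \<i> * w * of_real \<theta>))"
  defines "W11 \<equiv> (\<lambda>\<theta>. - \<i> * g11 / w * q \<theta> + \<i> * cnj g11 / w * qb \<theta> + E2)"
  defines "g21 \<equiv> Db * (2 * (B W11 q + B q W11) + (B W20 qb + B qb W20))"
  shows "hopf_first_lyapunov n d b Q \<omega> =
     \<i> / (2 * w) * (g20 * g11 - 2 * (of_real (cmod g11))\<^sup>2 - (of_real (cmod g02))\<^sup>2 / 3) + g21 / 2"
  unfolding hopf_first_lyapunov_def Let_def assms by (rule refl)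

lemma L_quad: "dde_quad 3 (rcp_delays t1 t2) (rcp_quadcoeff k a C g t1 t2) \<phi> \<psi>
   = of_real (- 2 * k * a / (g * C * (t1 + t2))) * \<phi> 0 * (\<psi> (- t1) + \<psi> (- t2))"
  by (simp add: dde_quad_def numeral_3_eq_3 lessThan_Suc rcp_delays_def rcp_quadcoeff_def algebra_simps add_divide_distrib)

lemma L_char: "dde_char 3 (rcp_delays t1 t2) (rcp_lin k a t1 t2) l
   = l + of_real (k * a / (t1 + t2)) * (exp (- l * of_real t1) + exp (- l * of_real t2))"
  by (simp add: dde_char_def numeral_3_eq_3 lessThan_Suc rcp_delays_def rcp_lin_def algebra_simps)

lemma L_charD: "dde_char_deriv 3 (rcp_delays t1 t2) (rcp_lin k a t1 t2) l
   = 1 - of_real (k * a / (t1 + t2)) * (of_real t1 * exp (- l * of_real t1) + of_real t2 * exp (- l * of_real t2))"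
  by (simp add: dde_char_deriv_def numeral_3_eq_3 lessThan_Suc rcp_delays_def rcp_lin_def algebra_simps)

lemma exp_ir: "exp (\<i> * complex_of_real x) = Complex (cos x) (sin x)"
  by (simp add: cis_conv_exp[symmetric] complex_eq_iff)

lemma c1_setup:
  fixes a C g t1 t2 :: real
  assumes "a > 0" "C > 0" "t1 > 0" "t2 > 0" "g > 0"
  defines "T \<equiv> t1 + t2"
  defines "th \<equiv> pi * t1 / T"
  defines "s \<equiv> sin th" and "c \<equiv> cos th" and "C2 \<equiv> cos (2 * th)" and "S2 \<equiv> sin (2 * th)"
  defines "om \<equiv> rcp_omega0 t1 t2"
  defines "kap \<equiv> rcp_kappa_c a t1 t2"
  defines "q0 \<equiv> - 2 * kap * a / (g * C * T)"
  defines "P \<equiv> 1 + c * (pi - 2 * th) / (2 * s)"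
  shows "Re (rcp_c1 a C g t1 t2) < 0"
proof -
  have T0: "T > 0" using assms(1-5) by (simp add: T_def)
  have th0: "0 < th" "th < pi" using assms(1-5) T0 by (auto simp: th_def T_def field_simps)
  have s0: "s > 0" using th0 by (simp add: s_def sin_gt_zero)
  have om_def': "om = pi / T" by (simp add: om_def rcp_omega0_def T_def)
  have om0: "om > 0" using T0 om_def' by simp
  have omt1: "om * t1 = th" by (simp add: om_def' th_def)
  have omt2: "om * t2 = pi - th" using T0 by (simp add: om_def' th_def T_def field_simps)
  have cosk: "cos (pi * (t1 - t2) / (2 * (t1 + t2))) = s"
  proof -
    have "pi * (t1 - t2) / (2 * (t1 + t2)) = th - pi/2" using T0 by (simp add: th_def T_def field_simps)
    then show ?thesis by (simp add: cos_diff s_def)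
  qed
  have kap_def': "kap = pi / (2 * a * s)" unfolding kap_def rcp_kappa_c_def cosk by simp
  define k where "k = kap * a / T"
  have k_def': "k = om / (2 * s)" using assms(1) s0 T0 by (simp add: k_def kap_def' om_def' field_simps)
  have kt1: "k * t1 = th / (2 * s)" using s0 by (simp add: k_def' omt1[symmetric] field_simps)
  have kt2: "k * t2 = (pi - th) / (2 * s)" using s0 by (simp add: k_def' omt2[symmetric] field_simps)
  have q0_def': "q0 = - 2 * k / (g * C)" using assms(1-5) T0 by (simp add: q0_def k_def field_simps)
  define w where "w = complex_of_real om"
  have omt2c: "complex_of_real om * complex_of_real t2 = of_real pi - of_real th"
    by (simp flip: of_real_mult of_real_diff add: omt2)
  have e1: "exp (\<i> * w * of_real (- t1)) = Complex c (- s)"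
  proof -
    have h: "\<i> * w * of_real (- t1) = \<i> * of_real (- th)" by (simp add: w_def omt1[symmetric])
    show ?thesis unfolding h exp_ir by (simp add: s_def c_def)
  qed
  have e2: "exp (\<i> * w * of_real (- t2)) = Complex (- c) (- s)"
  proof -
    have h: "\<i> * w * of_real (- t2) = \<i> * of_real (- (pi - th))" by (simp add: w_def omt2[symmetric])
    show ?thesis unfolding h exp_ir by (simp add: s_def c_def)
  qed
  have f1: "exp (2 * \<i> * w * of_real (- t1)) = Complex C2 (- S2)"
  proof -
    have h: "2 * \<i> * w * of_real (- t1) = \<i> * of_real (- (2 * th))" by (simp add: w_def omt1[symmetric])
    show ?thesis unfolding h exp_ir by (simp add: C2_def S2_def)
  qed
  have f2: "exp (2 * \<i> * w * of_real (- t2)) = Complex C2 S2"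
  proof -
    have h0: "w * of_real t2 = of_real (pi - th)" by (simp add: w_def flip: of_real_mult omt2)
    have h: "2 * \<i> * w * of_real (- t2) = \<i> * of_real (2 * th - 2 * pi)"
    proof -
      have "2 * \<i> * w * of_real (- t2) = -2 * \<i> * (w * of_real t2)" by simp
      also have "... = -2 * \<i> * of_real (pi - th)" by (simp only: h0)
      also have "... = \<i> * of_real (2 * th - 2 * pi)" by (simp add: algebra_simps)
      finally show ?thesis .
    qed
    show ?thesis unfolding h exp_ir by (simp add: C2_def S2_def cos_diff sin_diff)
  qed
  have D: "dde_char_deriv 3 (rcp_delays t1 t2) (rcp_lin kap a t1 t2) (\<i> * w) = Complex P (pi / 2)"
  proof -
    have "exp (- (\<i> * w) * of_real t1) = Complex c (- s)" using e1 by simp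
    moreover have "exp (- (\<i> * w) * of_real t2) = Complex (- c) (- s)" using e2 by simp
    ultimately have "dde_char_deriv 3 (rcp_delays t1 t2) (rcp_lin kap a t1 t2) (\<i> * w)
       = 1 - of_real k * (of_real t1 * Complex c (- s) + of_real t2 * Complex (- c) (- s))"
      by (simp add: L_charD k_def T_def)
    also have "... = Complex (1 - (k*t1) * c + (k*t2) * c) ((k*t1) * s + (k*t2) * s)"
      by (simp add: complex_eq_iff algebra_simps)
    also have "... = Complex P (pi / 2)" using s0 unfolding kt1 kt2 P_def
      by (simp add: field_simps)
    finally show ?thesis .
  qed
  have K: "dde_char 3 (rcp_delays t1 t2) (rcp_lin kap a t1 t2) (2 * \<i> * w) = Complex (om * C2 / s) (2 * om)"
  proof -
    have "exp (- (2 * \<i> * w) * of_real t1) = Complex C2 (- S2)" using f1 by simp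
    moreover have "exp (- (2 * \<i> * w) * of_real t2) = Complex C2 S2" using f2 by simp
    ultimately have "dde_char 3 (rcp_delays t1 t2) (rcp_lin kap a t1 t2) (2 * \<i> * w)
       = 2 * \<i> * w + of_real k * (Complex C2 (- S2) + Complex C2 S2)"
      by (simp add: L_char k_def T_def)
    also have "... = Complex (om * C2 / s) (2 * om)" using s0
      by (simp add: complex_eq_iff w_def k_def' field_simps)
    finally show ?thesis .
  qed
  define q where "q \<equiv> (\<lambda>\<theta>::real. exp (\<i> * w * of_real \<theta>))"
  define qb where "qb \<equiv> (\<lambda>\<theta>::real. cnj (q \<theta>))"
  define B where "B \<equiv> dde_quad 3 (rcp_delays t1 t2) (rcp_quadcoeff kap a C g t1 t2)"
  define Db where "Db \<equiv> 1 / dde_char_deriv 3 (rcp_delays t1 t2) (rcp_lin kap a t1 t2) (\<i> * w)"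
  define F20 where "F20 \<equiv> 2 * B q q"
  define F11 where "F11 \<equiv> B q qb + B qb q"
  define F02 where "F02 \<equiv> 2 * B qb qb"
  define g20 where "g20 \<equiv> Db * F20"
  define g11 where "g11 \<equiv> Db * F11"
  define g02 where "g02 \<equiv> Db * F02"
  define E1 where "E1 \<equiv> F20 / dde_char 3 (rcp_delays t1 t2) (rcp_lin kap a t1 t2) (2 * \<i> * w)"
  define E2 where "E2 \<equiv> F11 / dde_char 3 (rcp_delays t1 t2) (rcp_lin kap a t1 t2) 0"
  define W20 where "W20 \<equiv> (\<lambda>\<theta>. \<i> * g20 / w * q \<theta> + \<i> * cnj g02 / (3 * w) * qb \<theta>
                    + E1 * exp (2 * \<i> * w * of_real \<theta>))"
  define W11 where "W11 \<equiv> (\<lambda>\<theta>. - \<i> * g11 / w * q \<theta> + \<i> * cnj g11 / w * qb \<theta> + E2)"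
  define g21 where "g21 \<equiv> Db * (2 * (B W11 q + B q W11) + (B W20 qb + B qb W20))"
  have c1eq: "rcp_c1 a C g t1 t2 =
     \<i> / (2 * w) * (g20 * g11 - 2 * (of_real (cmod g11))\<^sup>2 - (of_real (cmod g02))\<^sup>2 / 3) + g21 / 2"
    unfolding rcp_c1_def g21_def W11_def W20_def E1_def E2_def g20_def g11_def g02_def F20_def F11_def F02_def
      Db_def B_def qb_def q_def w_def kap_def om_def
    by (rule hfl_unfold)
  have Bf: "\<And>\<phi> \<psi>. B \<phi> \<psi> = of_real q0 * \<phi> 0 * (\<psi> (- t1) + \<psi> (- t2))"
    by (simp add: B_def L_quad q0_def T_def)
  define \<sigma> where "\<sigma> = 2 * \<i> * complex_of_real s"
  have q0v: "q 0 = 1" "qb 0 = 1" by (simp_all add: q_def qb_def)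
  have qs: "q (- t1) + q (- t2) = - \<sigma>" using e1 e2 by (simp add: q_def \<sigma>_def complex_eq_iff)
  have qbs: "qb (- t1) + qb (- t2) = \<sigma>" using e1 e2 by (simp add: q_def qb_def \<sigma>_def complex_eq_iff)
  have xs: "exp (2 * \<i> * w * of_real (- t1)) + exp (2 * \<i> * w * of_real (- t2)) = 2 * of_real C2"
    using f1 f2 by (simp add: complex_eq_iff)
  have F20v: "F20 = - 2 * of_real q0 * \<sigma>" by (simp add: F20_def Bf q0v qs)
  have F11v: "F11 = 0" by (simp add: F11_def Bf q0v qs qbs)
  have F02v: "F02 = 2 * of_real q0 * \<sigma>" by (simp add: F02_def Bf q0v qbs)
  have g11v: "g11 = 0" by (simp add: g11_def F11v)
  have E2v: "E2 = 0" by (simp add: E2_def F11v)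
  have W11v: "W11 = (\<lambda>_. 0)" by (simp add: W11_def g11v E2v)
  define A where "A = \<i> * g20 / w"
  define Bc where "Bc = \<i> * cnj g02 / (3 * w)"
  have W20v0: "W20 0 = A + Bc + E1" by (simp add: W20_def A_def Bc_def q0v)
  have W20s: "W20 (- t1) + W20 (- t2) = A * (- \<sigma>) + Bc * \<sigma> + E1 * (2 * of_real C2)"
  proof -
    have "W20 (- t1) + W20 (- t2) = A * (q (- t1) + q (- t2)) + Bc * (qb (- t1) + qb (- t2))
       + E1 * (exp (2 * \<i> * w * of_real (- t1)) + exp (2 * \<i> * w * of_real (- t2)))"
      unfolding W20_def A_def Bc_def by (simp add: algebra_simps add_divide_distrib)
    then show ?thesis by (simp only: qs qbs xs)
  qed
  have g21v: "g21 = Db * of_real q0 * (2 * Bc * \<sigma>) + Db * of_real q0 * E1 * (\<sigma> + 2 * of_real C2)"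
    unfolding g21_def by (simp add: Bf W11v W20v0 W20s q0v qbs algebra_simps)
  have Dv: "Db = 1 / Complex P (pi / 2)" using D by (simp add: Db_def)
  have Dnz: "Complex P (pi / 2) \<noteq> 0" by (simp add: complex_eq_iff)
  have Knz: "Complex (om * C2 / s) (2 * om) \<noteq> 0" using om0 by (simp add: complex_eq_iff)
  have wnz: "w \<noteq> 0" using om0 by (simp add: w_def)
  have part1: "Db * of_real q0 * (2 * Bc * \<sigma>) = \<i> * of_real ((cmod Db)^2 * 16 * q0^2 * s^2 / (3 * om))"
  proof -
    have cs: "cnj \<sigma> = - \<sigma>" by (simp add: \<sigma>_def)
    have ss: "\<sigma> * \<sigma> = - 4 * of_real (s^2)" by (simp add: \<sigma>_def power2_eq_square algebra_simps)
    have "Db * of_real q0 * (2 * Bc * \<sigma>) = \<i> * (Db * cnj Db) * (- 4 * of_real q0 ^ 2 * (\<sigma> * \<sigma>)) / (3 * w)"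
      by (simp add: Bc_def g02_def F02v cs power2_eq_square algebra_simps)
    also have "... = \<i> * of_real ((cmod Db)^2 * 16 * q0^2 * s^2 / (3 * om))"
      by (simp only: ss complex_norm_square[symmetric]) (simp add: w_def algebra_simps)
    finally show ?thesis .
  qed
  have part2: "Db * of_real q0 * E1 * (\<sigma> + 2 * of_real C2)
      = (- 2 * of_real q0 ^ 2 * \<sigma> * (\<sigma> + 2 * of_real C2)) / (Complex P (pi / 2) * Complex (om * C2 / s) (2 * om))"
    using Dnz Knz unfolding Dv E1_def F20v K by (simp add: field_simps power2_eq_square)
  have r1: "Re (\<i> / (2 * w) * (g20 * g11 - 2 * (of_real (cmod g11))\<^sup>2 - (of_real (cmod g02))\<^sup>2 / 3)) = 0"
  proof -
    have "\<i> / (2 * w) * (g20 * g11 - 2 * (of_real (cmod g11))\<^sup>2 - (of_real (cmod g02))\<^sup>2 / 3)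
        = \<i> * of_real (- ((cmod g02)\<^sup>2) / (6 * om))"
      using om0 by (simp add: g11v w_def field_simps power2_eq_square)
    then show ?thesis by simp
  qed
  define X where "X = - 2 * of_real q0 ^ 2 * \<sigma> * (\<sigma> + 2 * of_real C2)"
  define Y where "Y = Complex P (pi / 2) * Complex (om * C2 / s) (2 * om)"
  have ReX: "Re X = 8 * q0^2 * s^2" by (simp add: X_def \<sigma>_def power2_eq_square)
  have ImX: "Im X = - 8 * q0^2 * s * C2" by (simp add: X_def \<sigma>_def power2_eq_square)
  have ReY: "Re Y = P * (om * C2 / s) - pi / 2 * (2 * om)" by (simp add: Y_def)
  have ImY: "Im Y = P * (2 * om) + pi / 2 * (om * C2 / s)" by (simp add: Y_def)
  have num: "Re X * Re Y + Im X * Im Y = 4 * q0^2 * om * f_tilde th / s^2"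
    using s0 unfolding ReX ImX ReY ImY f_tilde_def P_def s_def[symmetric] c_def[symmetric] C2_def[symmetric]
    by (simp add: field_simps power2_eq_square power4_eq_xxxx power3_eq_cube)
  have Ynz: "Y \<noteq> 0" using Dnz Knz by (simp add: Y_def)
  then have denpos: "(Re Y)^2 + (Im Y)^2 > 0" by (simp add: complex_eq_iff sum_power2_gt_zero_iff)
  have kap0: "kap > 0" using assms(1) s0 by (simp add: kap_def')
  have q0nz: "q0 \<noteq> 0" using kap0 assms(1-5) T0 by (simp add: q0_def)
  have ft: "f_tilde th < 0" using f_tilde_neg th0 by simp
  have numneg: "Re X * Re Y + Im X * Im Y < 0"
    unfolding num using q0nz om0 s0 ft by (simp add: divide_neg_pos mult_pos_neg)
  have "Re (rcp_c1 a C g t1 t2) = Re g21 / 2" unfolding c1eq using r1 by simp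
  also have "Re g21 = Re (X / Y)" unfolding g21v part1 part2 X_def Y_def by simp
  also have "Re (X / Y) = (Re X * Re Y + Im X * Im Y) / ((Re Y)^2 + (Im Y)^2)" by (rule Re_divide)
  finally show ?thesis using numneg denpos by (simp add: divide_neg_pos)
qed
lemma transv:
  fixes a t1 t2 :: real and lam :: "real \<Rightarrow> complex" and l :: complex
  assumes "a > 0" "t1 > 0" "t2 > 0"
  assumes lam0: "lam (rcp_kappa_c a t1 t2) = \<i> * of_real (rcp_omega0 t1 t2)"
    and dlam: "(lam has_vector_derivative l) (at (rcp_kappa_c a t1 t2))"
    and ev: "\<forall>\<^sub>F \<kappa> in nhds (rcp_kappa_c a t1 t2). rcp_char a t1 t2 \<kappa> (lam \<kappa>) = 0"
  shows "Re l > 0"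
proof -
  define T where "T = t1 + t2"
  define th where "th = pi * t1 / T"
  define s where "s = sin th"
  define c where "c = cos th"
  define om where "om = rcp_omega0 t1 t2"
  define kap where "kap = rcp_kappa_c a t1 t2"
  define P where "P = 1 + c * (pi - 2 * th) / (2 * s)"
  have T0: "T > 0" using assms(1-3) by (simp add: T_def)
  have th0: "0 < th" "th < pi" using assms(1-3) T0 by (auto simp: th_def T_def field_simps)
  have s0: "s > 0" using th0 by (simp add: s_def sin_gt_zero)
  have om_def': "om = pi / T" by (simp add: om_def rcp_omega0_def T_def)
  have om0: "om > 0" using T0 om_def' by simp
  have omt1: "om * t1 = th" by (simp add: om_def' th_def)
  have omt2: "om * t2 = pi - th" using T0 by (simp add: om_def' th_def T_def field_simps)
  have cosk: "cos (pi * (t1 - t2) / (2 * (t1 + t2))) = s"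
  proof -
    have "pi * (t1 - t2) / (2 * (t1 + t2)) = th - pi/2" using T0 by (simp add: th_def T_def field_simps)
    then show ?thesis by (simp add: cos_diff s_def)
  qed
  have kap_def': "kap = pi / (2 * a * s)" unfolding kap_def rcp_kappa_c_def cosk by simp
  define k where "k = kap * a / T"
  define m where "m = a / T"
  have k_def': "k = om / (2 * s)" using assms(1) s0 T0 by (simp add: k_def kap_def' om_def' field_simps)
  have kt1: "k * t1 = th / (2 * s)" using s0 by (simp add: k_def' omt1[symmetric] field_simps)
  have kt2: "k * t2 = (pi - th) / (2 * s)" using s0 by (simp add: k_def' omt2[symmetric] field_simps)
  define e1 where "e1 = exp (- lam kap * of_real t1)"
  define e2 where "e2 = exp (- lam kap * of_real t2)"
  have e1v: "e1 = Complex c (- s)"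
  proof -
    have h: "- lam kap * of_real t1 = \<i> * of_real (- th)"
      by (simp add: lam0[folded kap_def om_def] flip: omt1)
    show ?thesis unfolding e1_def h exp_ir by (simp add: s_def c_def)
  qed
  have e2v: "e2 = Complex (- c) (- s)"
  proof -
    have h0: "of_real om * of_real t2 = (of_real (pi - th) :: complex)" by (simp flip: of_real_mult omt2)
    have h: "- lam kap * of_real t2 = \<i> * of_real (- (pi - th))"
    proof -
      have "- lam kap * of_real t2 = - \<i> * (of_real om * of_real t2)" by (simp add: lam0[folded kap_def om_def])
      also have "... = \<i> * of_real (- (pi - th))" by (simp only: h0) (simp add: algebra_simps)
      finally show ?thesis .
    qed
    show ?thesis unfolding e2_def h exp_ir by (simp add: s_def c_def)
  qed
  have dlam': "(lam has_vector_derivative l) (at kap)" using dlam by (simp add: kap_def)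
  have dE: "((\<lambda>\<kappa>. exp (- lam \<kappa> * of_real t)) has_vector_derivative (l * (exp (- lam kap * of_real t) * (- of_real t)))) (at kap)" for t
  proof -
    have "((\<lambda>z. exp (- z * of_real t)) has_field_derivative (exp (- lam kap * of_real t) * (- of_real t))) (at (lam kap))"
      by (auto intro!: derivative_eq_intros)
    from field_vector_diff_chain_at[OF dlam' this] show ?thesis by (simp add: o_def)
  qed
  have dK: "((\<lambda>\<kappa>. complex_of_real (\<kappa> * a / (t1 + t2))) has_vector_derivative of_real m) (at kap)"
    by (auto intro!: derivative_eq_intros simp: m_def T_def)
  define d where "d = l + (of_real (kap * a / (t1 + t2)) * (l * (e1 * (- of_real t1)) + l * (e2 * (- of_real t2)))
      + of_real m * (e1 + e2))"
  have dG: "((\<lambda>\<kappa>. rcp_char a t1 t2 \<kappa> (lam \<kappa>)) has_vector_derivative d) (at kap)"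
    unfolding rcp_char_def d_def e1_def e2_def
    by (rule has_vector_derivative_add[OF dlam' has_vector_derivative_mult[OF dK has_vector_derivative_add[OF dE dE]]])
  have ev': "\<forall>\<^sub>F \<kappa> in nhds kap. rcp_char a t1 t2 \<kappa> (lam \<kappa>) = 0" using ev by (simp add: kap_def)
  have dG0: "((\<lambda>\<kappa>. rcp_char a t1 t2 \<kappa> (lam \<kappa>)) has_vector_derivative 0) (at kap)"
  proof -
    have z: "((\<lambda>_. 0::complex) has_derivative (\<lambda>x. x *\<^sub>R 0)) (at kap within UNIV)" by simp
    have "\<forall>\<^sub>F x in at kap within UNIV. 0 = rcp_char a t1 t2 x (lam x)"
      using filter_leD[OF at_within_le_nhds ev'] by (auto elim: eventually_mono)
    from has_derivative_transform_eventually[OF z this] eventually_nhds_x_imp_x[OF ev']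
    show ?thesis unfolding has_vector_derivative_def by simp
  qed
  have d0: "d = 0" using vector_derivative_unique_at[OF dG dG0] .
  have "d = l * (1 - of_real k * (of_real t1 * e1 + of_real t2 * e2)) + of_real m * (e1 + e2)"
    by (simp add: d_def k_def T_def algebra_simps add_divide_distrib)
  also have "1 - of_real k * (of_real t1 * e1 + of_real t2 * e2) = Complex P (pi / 2)"
  proof -
    have "1 - of_real k * (of_real t1 * e1 + of_real t2 * e2) = Complex (1 - (k*t1) * c + (k*t2) * c) ((k*t1) * s + (k*t2) * s)"
      by (simp add: e1v e2v complex_eq_iff algebra_simps)
    also have "... = Complex P (pi / 2)" using s0 unfolding kt1 kt2 P_def
      by (simp add: field_simps)
    finally show ?thesis .
  qed
  finally have "l * Complex P (pi / 2) + of_real m * (e1 + e2) = 0" using d0 by simp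
  then have eqs: "Re l * P - Im l * (pi/2) = 0" "Re l * (pi/2) + Im l * P - 2 * m * s = 0"
    by (simp_all add: complex_eq_iff e1v e2v)
  have "Re l * (P^2 + (pi/2)^2) = pi * m * s"
  proof -
    have "P * (Re l * P - Im l * (pi/2)) + (pi/2) * (Re l * (pi/2) + Im l * P - 2 * m * s) = 0"
      using eqs by simp
    then show ?thesis by (simp add: power2_eq_square algebra_simps)
  qed
  moreover have "pi * m * s > 0" using assms(1) T0 s0 by (simp add: m_def)
  moreover have "P^2 + (pi/2)^2 > 0" by (simp add: add_nonneg_pos)
  ultimately show ?thesis by (metis zero_less_mult_pos2)
qed

theorem mainTheorem7:
  fixes a C \<gamma> \<tau>1 \<tau>2 :: real
  assumes "a > 0" "C > 0" "\<tau>1 > 0" "\<tau>2 > 0" "0 < \<gamma>" "\<gamma> \<le> 1"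
  defines "\<kappa>c \<equiv> rcp_kappa_c a \<tau>1 \<tau>2"
    and "\<omega>0 \<equiv> rcp_omega0 \<tau>1 \<tau>2"
    and "\<theta> \<equiv> pi * \<tau>1 / (\<tau>1 + \<tau>2)"
    and "c1 \<equiv> rcp_c1 a C \<gamma> \<tau>1 \<tau>2"
  shows "sgn (Re c1) = sgn (2 * pi * f_tilde \<theta> / ((\<gamma> * C)\<^sup>2 * (\<tau>1 + \<tau>2)))
       \<and> sgn (2 * pi * f_tilde \<theta> / ((\<gamma> * C)\<^sup>2 * (\<tau>1 + \<tau>2))) = sgn (f_tilde \<theta>)
       \<and> f_tilde \<theta> < 0
       \<and> 2 * Re c1 < 0
       \<and> (\<forall>(lam::real \<Rightarrow> complex) l.
            lam \<kappa>c = \<i> * of_real \<omega>0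
            \<and> (lam has_vector_derivative l) (at \<kappa>c)
            \<and> (\<forall>\<^sub>F \<kappa> in nhds \<kappa>c. rcp_char a \<tau>1 \<tau>2 \<kappa> (lam \<kappa>) = 0)
            \<longrightarrow> Re l > 0 \<and> - Re c1 / Re l > 0)"
proof -
  have c1neg: "Re c1 < 0" unfolding c1_def using c1_setup assms(1-5) by blast
  have th0: "0 < \<theta>" "\<theta> < pi" using assms(3,4) by (auto simp: \<theta>_def field_simps)
  have ft: "f_tilde \<theta> < 0" using f_tilde_neg th0 by simp
  have dpos: "(\<gamma> * C)\<^sup>2 * (\<tau>1 + \<tau>2) > 0" using assms(2-5) by simp
  have q: "2 * pi * f_tilde \<theta> / ((\<gamma> * C)\<^sup>2 * (\<tau>1 + \<tau>2)) < 0"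
    using ft dpos by (simp add: divide_neg_pos mult_pos_neg)
  have tr: "Re l > 0 \<and> - Re c1 / Re l > 0"
    if "lam \<kappa>c = \<i> * of_real \<omega>0 \<and> (lam has_vector_derivative l) (at \<kappa>c)
            \<and> (\<forall>\<^sub>F \<kappa> in nhds \<kappa>c. rcp_char a \<tau>1 \<tau>2 \<kappa> (lam \<kappa>) = 0)" for lam l
  proof -
    have "Re l > 0" using transv[of a \<tau>1 \<tau>2 lam l] that assms(1,3,4) unfolding \<kappa>c_def \<omega>0_def by blast
    then show ?thesis using c1neg by (simp add: divide_neg_pos)
  qed
  show ?thesis using c1neg ft q tr assms(2-5) by (simp add: sgn_if)
qed

end
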